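(* Let $n\ge 4$ and let $W_n^\sigma=(W_n,\sigma)$ be a signed wheel with central vertex $v_0$. Then $W_n^\sigma$ is distance compatible if and only if it contains no negative $4$-cycle (cycle of length $4$ whose product of edge signs is $-1$) having $v_0$ as one of its vertices.
   Context: The wheel $W_n$ is the join of the cycle $C_n$ with a single vertex $v_0$ (the central vertex); the vertices of $C_n$ are the rim vertices. A signed graph $\Sigma=(G,\sigma)$ consists of a finite simple connected graph $G=(V,E)$ and a signature $\sigma:E\to\{+1,-1\}$; the sign of a path or cycle is the product of its edge signs. For vertices $u,v$, $d(u,v)$ denotes the usual distance in $G$. Set $\sigma_{\max}(uv)=-1$ if every shortest $u$–$v$ path has sign $-1$, and $\sigma_{\max}(uv)=+1$ otherwise; set $\sigma_{\min}(uv)=+1$ if every shortest $u$–$v$ path has sign $+1$, and $\sigma_{\min}(uv)=-1$ otherwise. $\Sigma$ is (distance) compatible if $\sigma_{\max}(uv)d(u,v)=\sigma_{\min}(uv)d(u,v)$ for all vertices $u,v$. *)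

theory Defs
  imports Main
begin

text \<open>Simple graphs are given by a vertex set V and a set E of 2-element edges {u,v}.
A signature is a function on edges with values +1/-1.\<close>

definition walk :: "'a set set \<Rightarrow> 'a list \<Rightarrow> bool" where
  "walk E xs \<longleftrightarrow> xs \<noteq> [] \<and> (\<forall>(a,b) \<in> set (zip xs (tl xs)). {a,b} \<in> E)"

definition walk_edges :: "'a list \<Rightarrow> 'a set list" where
  "walk_edges xs = map (\<lambda>(a,b). {a,b}) (zip xs (tl xs))"

definition path_sign :: "('a set \<Rightarrow> int) \<Rightarrow> 'a list \<Rightarrow> int" where
  "path_sign \<sigma> xs = prod_list (map \<sigma> (walk_edges xs))"

definition gdist :: "'a set set \<Rightarrow> 'a \<Rightarrow> 'a \<Rightarrow> nat" where
  "gdist E u v = (LEAST k. \<exists>xs. walk E xs \<and> hd xs = u \<and> last xs = v \<and> length xs = Suc k)"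

definition shortest_path :: "'a set set \<Rightarrow> 'a \<Rightarrow> 'a \<Rightarrow> 'a list \<Rightarrow> bool" where
  "shortest_path E u v xs \<longleftrightarrow> walk E xs \<and> distinct xs \<and> hd xs = u \<and> last xs = v
      \<and> length xs = Suc (gdist E u v)"

definition sigma_max :: "'a set set \<Rightarrow> ('a set \<Rightarrow> int) \<Rightarrow> 'a \<Rightarrow> 'a \<Rightarrow> int" where
  "sigma_max E \<sigma> u v =
     (if \<forall>p. shortest_path E u v p \<longrightarrow> path_sign \<sigma> p = -1 then -1 else 1)"

definition sigma_min :: "'a set set \<Rightarrow> ('a set \<Rightarrow> int) \<Rightarrow> 'a \<Rightarrow> 'a \<Rightarrow> int" where
  "sigma_min E \<sigma> u v =
     (if \<forall>p. shortest_path E u v p \<longrightarrow> path_sign \<sigma> p = 1 then 1 else -1)"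

definition dist_compatible :: "'a set \<Rightarrow> 'a set set \<Rightarrow> ('a set \<Rightarrow> int) \<Rightarrow> bool" where
  "dist_compatible V E \<sigma> \<longleftrightarrow>
     (\<forall>u\<in>V. \<forall>v\<in>V. sigma_max E \<sigma> u v * int (gdist E u v) = sigma_min E \<sigma> u v * int (gdist E u v))"

definition has_neg_4cycle_through :: "'a set set \<Rightarrow> ('a set \<Rightarrow> int) \<Rightarrow> 'a \<Rightarrow> bool" where
  "has_neg_4cycle_through E \<sigma> w \<longleftrightarrow>
     (\<exists>a b c d. distinct [a,b,c,d] \<and> {a,b} \<in> E \<and> {b,c} \<in> E \<and> {c,d} \<in> E \<and> {d,a} \<in> E
        \<and> w \<in> {a,b,c,d} \<and> \<sigma> {a,b} * \<sigma> {b,c} * \<sigma> {c,d} * \<sigma> {d,a} = -1)"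

text \<open>The wheel W_n: central vertex 0, rim cycle 1 - 2 - ... - n - 1.\<close>
definition wheel_vertices :: "nat \<Rightarrow> nat set" where
  "wheel_vertices n = {0..n}"

definition wheel_edges :: "nat \<Rightarrow> nat set set" where
  "wheel_edges n = {{0, i} | i. i \<in> {1..n}} \<union> {{i, i mod n + 1} | i. i \<in> {1..n}}"

end

theory Submission
  imports Defs
begin

definition sc :: "nat \<Rightarrow> nat \<Rightarrow> nat" where
  "sc n x = (if x = n then 1 else Suc x)"

lemma mod_sc: "1 \<le> i \<Longrightarrow> i \<le> n \<Longrightarrow> i mod n + 1 = sc n i"
  by (auto simp: sc_def)

lemma edge_iff:
  assumes "n \<ge> 2"
  shows "{x,y} \<in> wheel_edges n \<longleftrightarrow> x \<noteq> y \<and> x \<le> n \<and> y \<le> n \<and> (x = 0 \<or> y = 0 \<or> y = sc n x \<or> x = sc n y)"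
proof
  assume "{x,y} \<in> wheel_edges n"
  then obtain i where i: "i \<in> {1..n}" and "{x,y} = {0,i} \<or> {x,y} = {i, i mod n + 1}"
    unfolding wheel_edges_def by blast
  then have "{x,y} = {0,i} \<or> {x,y} = {i, sc n i}" using mod_sc[of i n] by auto
  then show "x \<noteq> y \<and> x \<le> n \<and> y \<le> n \<and> (x = 0 \<or> y = 0 \<or> y = sc n x \<or> x = sc n y)"
    using i assms by (auto simp: doubleton_eq_iff sc_def split: if_splits)
next
  assume h: "x \<noteq> y \<and> x \<le> n \<and> y \<le> n \<and> (x = 0 \<or> y = 0 \<or> y = sc n x \<or> x = sc n y)"
  show "{x,y} \<in> wheel_edges n"
  proof (cases "x = 0 \<or> y = 0")
    case True
    then have "{x,y} = {0, max x y} \<and> max x y \<in> {1..n}" using h by auto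
    then show ?thesis unfolding wheel_edges_def by blast
  next
    case False
    then have "y = sc n x \<or> x = sc n y" using h by auto
    then obtain i where "i \<in> {1..n}" "{x,y} = {i, sc n i}"
      using h False by (metis atLeastAtMost_iff insert_commute less_one not_le)
    then have "{x,y} = {i, i mod n + 1} \<and> i \<in> {1..n}" using mod_sc[of i n] by auto
    then show ?thesis unfolding wheel_edges_def by blast
  qed
qed

lemma walk1: "walk E [u]" by (simp add: walk_def)
lemma walk2: "walk E [u,v] \<longleftrightarrow> {u,v}\<in>E" by (simp add: walk_def)
lemma walk3: "walk E [u,w,v] \<longleftrightarrow> {u,w}\<in>E \<and> {w,v}\<in>E" by (simp add: walk_def)
lemma sign2: "path_sign \<sigma> [u,v] = \<sigma> {u,v}" by (simp add: path_sign_def walk_edges_def)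
lemma sign3: "path_sign \<sigma> [u,w,v] = \<sigma> {u,w} * \<sigma> {w,v}" by (simp add: path_sign_def walk_edges_def)

lemma gdist_le: "walk E xs \<Longrightarrow> hd xs = u \<Longrightarrow> last xs = v \<Longrightarrow> length xs = Suc k \<Longrightarrow> gdist E u v \<le> k"
  unfolding gdist_def by (rule Least_le) blast

lemma gdist_ex: assumes "walk E xs" "hd xs = u" "last xs = v"
  shows "\<exists>ys. walk E ys \<and> hd ys = u \<and> last ys = v \<and> length ys = Suc (gdist E u v)"
proof -
  have "xs \<noteq> []" using assms walk_def by auto
  then have "length xs = Suc (length xs - 1)" by simp
  then have "\<exists>k. \<exists>xs. walk E xs \<and> hd xs = u \<and> last xs = v \<and> length xs = Suc k" using assms by blast
  then show ?thesis unfolding gdist_def by (rule LeastI_ex)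
qed

lemma len1: "length xs = Suc 0 \<Longrightarrow> \<exists>a. xs = [a]" by (auto simp: length_Suc_conv)
lemma len2: "length xs = Suc (Suc 0) \<Longrightarrow> \<exists>a b. xs = [a,b]" by (auto simp: length_Suc_conv)
lemma len3: "length xs = Suc (Suc (Suc 0)) \<Longrightarrow> \<exists>a b c. xs = [a,b,c]" by (auto simp: length_Suc_conv)

lemma gdist0: "gdist E u u = 0"
  using gdist_le[of E "[u]" u u 0] walk1[of E u] by simp

lemma gdist1: assumes "{u,v}\<in>E" "u \<noteq> v" shows "gdist E u v = 1"
proof -
  have le: "gdist E u v \<le> 1" using gdist_le[of E "[u,v]" u v 1] walk2[of E u v] assms by simp
  obtain ys where ys: "walk E ys" "hd ys = u" "last ys = v" "length ys = Suc (gdist E u v)"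
    using gdist_ex[of E "[u,v]" u v] walk2[of E u v] assms by auto
  have "gdist E u v \<noteq> 0"
  proof
    assume "gdist E u v = 0"
    then obtain a where "ys = [a]" using len1 ys by auto
    then show False using ys assms by simp
  qed
  then show ?thesis using le by simp
qed

lemma gdist2: assumes "u \<noteq> v" "{u,v} \<notin> E" "{u,w}\<in>E" "{w,v}\<in>E" shows "gdist E u v = 2"
proof -
  have le: "gdist E u v \<le> 2" using gdist_le[of E "[u,w,v]" u v 2] walk3[of E u w v] assms by simp
  obtain ys where ys: "walk E ys" "hd ys = u" "last ys = v" "length ys = Suc (gdist E u v)"
    using gdist_ex[of E "[u,w,v]" u v] walk3[of E u w v] assms by auto
  have "gdist E u v \<noteq> 0"
  proof
    assume "gdist E u v = 0"
    then obtain a where "ys = [a]" using len1 ys by auto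
    then show False using ys assms by simp
  qed
  moreover have "gdist E u v \<noteq> 1"
  proof
    assume "gdist E u v = 1"
    then have "length ys = Suc (Suc 0)" using ys(4) by simp
    then obtain a b where "ys = [a,b]" using len2 by blast
    then show False using ys assms walk2[of E a b] by simp
  qed
  ultimately show ?thesis using le by simp
qed

lemma sig_eq:
  assumes "shortest_path E u v p0" "\<And>p. shortest_path E u v p \<Longrightarrow> path_sign \<sigma> p = s" "s = 1 \<or> s = -1"
  shows "sigma_max E \<sigma> u v = sigma_min E \<sigma> u v"
  using assms unfolding sigma_max_def sigma_min_def by force

lemma arith_rim:
  assumes "n \<ge> 4" "1 \<le> b" "b \<le> n" "1 \<le> c" "c \<le> n" "1 \<le> d" "d \<le> n"
    "c = sc n b \<or> b = sc n c" "d = sc n c \<or> c = sc n d" "b \<noteq> d"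
  shows "\<not> (d = sc n b \<or> b = sc n d)"
  using assms unfolding sc_def by (auto split: if_splits)

lemma core:
  fixes n :: nat and \<sigma> :: "nat set \<Rightarrow> int"
  assumes n: "n \<ge> 4"
    and sg: "\<forall>e \<in> wheel_edges n. \<sigma> e = 1 \<or> \<sigma> e = -1"
    and ds: "distinct [0,b,c,d]"
    and e: "{0,b} \<in> wheel_edges n" "{b,c} \<in> wheel_edges n" "{c,d} \<in> wheel_edges n" "{d,0} \<in> wheel_edges n"
    and pr: "\<sigma> {0,b} * \<sigma> {b,c} * \<sigma> {c,d} * \<sigma> {d,0} = -1"
  shows "\<not> dist_compatible (wheel_vertices n) (wheel_edges n) \<sigma>"
proof
  let ?E = "wheel_edges n"
  assume comp: "dist_compatible (wheel_vertices n) ?E \<sigma>"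
  have n2: "n \<ge> 2" using n by simp
  note EI = edge_iff[OF n2]
  have bnd: "1 \<le> b" "b \<le> n" "1 \<le> c" "c \<le> n" "1 \<le> d" "d \<le> n"
    using e ds EI by auto
  have r1: "c = sc n b \<or> b = sc n c" using e(2) ds EI by auto
  have r2: "d = sc n c \<or> c = sc n d" using e(3) ds EI by auto
  have nbd: "{b,d} \<notin> ?E" using arith_rim[OF n bnd r1 r2] ds EI by auto
  have e0b: "{b,0} \<in> ?E" "{0,d} \<in> ?E" using e by (auto simp: insert_commute)
  have gd: "gdist ?E b d = 2" using gdist2[OF _ nbd e0b] ds by simp
  have p1: "shortest_path ?E b d [b,0,d]" using gd e0b ds
    unfolding shortest_path_def by (auto simp: walk3)
  have p2: "shortest_path ?E b d [b,c,d]" using gd e ds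
    unfolding shortest_path_def by (auto simp: walk3)
  have s1: "path_sign \<sigma> [b,0,d] = \<sigma> {0,b} * \<sigma> {d,0}" by (simp add: sign3 insert_commute)
  have s2: "path_sign \<sigma> [b,c,d] = \<sigma> {b,c} * \<sigma> {c,d}" by (simp add: sign3)
  have vals: "\<sigma> {0,b} \<in> {1,-1}" "\<sigma> {b,c} \<in> {1,-1}" "\<sigma> {c,d} \<in> {1,-1}" "\<sigma> {d,0} \<in> {1,-1}"
    using sg e by auto
  have diff: "(path_sign \<sigma> [b,0,d] = 1 \<and> path_sign \<sigma> [b,c,d] = -1) \<or>
      (path_sign \<sigma> [b,0,d] = -1 \<and> path_sign \<sigma> [b,c,d] = 1)"
    unfolding s1 s2 using vals pr by auto
  have "sigma_max ?E \<sigma> b d = 1" using diff p1 p2 unfolding sigma_max_def by force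
  moreover have "sigma_min ?E \<sigma> b d = -1" using diff p1 p2 unfolding sigma_min_def by force
  moreover have "b \<in> wheel_vertices n" "d \<in> wheel_vertices n" using bnd by (auto simp: wheel_vertices_def)
  ultimately show False using comp gd unfolding dist_compatible_def by fastforce
qed

theorem theorem3p2:
  fixes n :: nat and \<sigma> :: "nat set \<Rightarrow> int"
  assumes "n \<ge> 4"
    and "\<forall>e \<in> wheel_edges n. \<sigma> e = 1 \<or> \<sigma> e = -1"
  shows "dist_compatible (wheel_vertices n) (wheel_edges n) \<sigma> \<longleftrightarrow>
           \<not> has_neg_4cycle_through (wheel_edges n) \<sigma> 0"
proof
  assume comp: "dist_compatible (wheel_vertices n) (wheel_edges n) \<sigma>"
  show "\<not> has_neg_4cycle_through (wheel_edges n) \<sigma> 0"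
  proof
    assume "has_neg_4cycle_through (wheel_edges n) \<sigma> 0"
    then obtain a b c d where h: "distinct [a,b,c,d]" "{a,b} \<in> wheel_edges n" "{b,c} \<in> wheel_edges n"
      "{c,d} \<in> wheel_edges n" "{d,a} \<in> wheel_edges n" "0 \<in> {a,b,c,d}"
      "\<sigma> {a,b} * \<sigma> {b,c} * \<sigma> {c,d} * \<sigma> {d,a} = -1"
      unfolding has_neg_4cycle_through_def by blast
    have "0 = a \<or> 0 = b \<or> 0 = c \<or> 0 = d" using h(6) by auto
    then show False
    proof (elim disjE)
      assume "0 = a" then show False using core[OF assms, of b c d] h comp by simp
    next
      assume a0: "0 = b"
      have "\<sigma> {b,c} * \<sigma> {c,d} * \<sigma> {d,a} * \<sigma> {a,b} = -1" using h(7) by (simp add: mult_ac)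
      then show False using core[OF assms, of c d a] h(1-5) comp a0 by simp
    next
      assume a0: "0 = c"
      have "\<sigma> {c,d} * \<sigma> {d,a} * \<sigma> {a,b} * \<sigma> {b,c} = -1" using h(7) by (simp add: mult_ac)
      then show False using core[OF assms, of d a b] h(1-5) comp a0 by simp
    next
      assume a0: "0 = d"
      have "\<sigma> {d,a} * \<sigma> {a,b} * \<sigma> {b,c} * \<sigma> {c,d} = -1" using h(7) by (simp add: mult_ac)
      then show False using core[OF assms, of a b c] h(1-5) comp a0 by simp
    qed
  qed
next
  let ?E = "wheel_edges n"
  assume nc: "\<not> has_neg_4cycle_through ?E \<sigma> 0"
  have n2: "n \<ge> 2" using assms by simp
  note EI = edge_iff[OF n2]
  note sg = assms(2)
  show "dist_compatible (wheel_vertices n) ?E \<sigma>"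
    unfolding dist_compatible_def
  proof (intro ballI)
    fix u v assume uv: "u \<in> wheel_vertices n" "v \<in> wheel_vertices n"
    then have uvn: "u \<le> n" "v \<le> n" by (auto simp: wheel_vertices_def)
    show "sigma_max ?E \<sigma> u v * int (gdist ?E u v) = sigma_min ?E \<sigma> u v * int (gdist ?E u v)"
    proof (cases "u = v")
      case True then show ?thesis by (simp add: gdist0)
    next
      case neq: False
      show ?thesis
      proof (cases "{u,v} \<in> ?E")
        case True
        have gd: "gdist ?E u v = 1" using gdist1[OF True neq] .
        have "sigma_max ?E \<sigma> u v = sigma_min ?E \<sigma> u v"
        proof (rule sig_eq)
          show "shortest_path ?E u v [u,v]" using gd True neq
            unfolding shortest_path_def by (auto simp: walk2)
          fix p assume "shortest_path ?E u v p"
          then have "p = [u,v]" using gd len2 unfolding shortest_path_def by fastforce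
          then show "path_sign \<sigma> p = \<sigma> {u,v}" by (simp add: sign2)
        next
          show "\<sigma> {u,v} = 1 \<or> \<sigma> {u,v} = -1" using sg True by auto
        qed
        then show ?thesis by simp
      next
        case ne: False
        have u0: "u \<noteq> 0" "v \<noteq> 0" using ne neq uvn EI by auto
        have e0: "{u,0} \<in> ?E" "{0,v} \<in> ?E" using u0 uvn EI by auto
        have gd: "gdist ?E u v = 2" using gdist2[OF neq ne e0] .
        have "sigma_max ?E \<sigma> u v = sigma_min ?E \<sigma> u v"
        proof (rule sig_eq)
          show "shortest_path ?E u v [u,0,v]" using gd e0 neq u0
            unfolding shortest_path_def by (auto simp: walk3)
          fix p assume sp: "shortest_path ?E u v p"
          then have "length p = Suc (Suc (Suc 0))" using gd unfolding shortest_path_def by simp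
          then obtain a w c where "p = [a,w,c]" using len3 by blast
          then have p: "p = [u,w,v]" using sp unfolding shortest_path_def by simp
          have ew: "{u,w} \<in> ?E" "{w,v} \<in> ?E" using sp p unfolding shortest_path_def by (auto simp: walk3)
          show "path_sign \<sigma> p = \<sigma> {u,0} * \<sigma> {0,v}"
          proof (cases "w = 0")
            case True then show ?thesis by (simp add: p sign3)
          next
            case w0: False
            have dst: "distinct [u,w,v,0]" using ew EI neq u0 w0 by auto
            have "\<sigma> {u,w} * \<sigma> {w,v} * \<sigma> {v,0} * \<sigma> {0,u} \<noteq> -1"
            proof
              assume "\<sigma> {u,w} * \<sigma> {w,v} * \<sigma> {v,0} * \<sigma> {0,u} = -1"
              moreover have "{v,0} \<in> ?E" "{0,u} \<in> ?E" using e0 by (auto simp: insert_commute)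
              ultimately have "has_neg_4cycle_through ?E \<sigma> 0"
                using dst ew unfolding has_neg_4cycle_through_def by blast
              then show False using nc by simp
            qed
            moreover have "\<sigma> {u,w} \<in> {1,-1}" "\<sigma> {w,v} \<in> {1,-1}" "\<sigma> {u,0} \<in> {1,-1}" "\<sigma> {0,v} \<in> {1,-1}"
              using sg ew e0 by auto
            moreover have "{v,0} = {0,v}" "{0,u} = {u,0}" by auto
            ultimately show ?thesis unfolding p sign3 by auto
          qed
        next
          have "\<sigma> {u,0} \<in> {1,-1}" "\<sigma> {0,v} \<in> {1,-1}" using sg e0 by auto
          then show "\<sigma> {u,0} * \<sigma> {0,v} = 1 \<or> \<sigma> {u,0} * \<sigma> {0,v} = -1" by auto
        qed
        then show ?thesis by simp
      qed
    qed
  qed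
qed

end
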